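(* Let $\succeq$ be a standard preference on $X=\Delta([a,b])^S$ with standard representation $(V,u)$, and let $\{\succeq^k\}_{k\ge1}$ be a sequence of standard preferences on $X$, each $\succeq^k$ having a standard representation $(V^k,u^k)$. (1) If $\succeq^k\to\succeq$ in the topology of closed convergence, then $u^k\to u$ and $V^k\to V$ in the compact-open topology (i.e. uniformly on compact sets; equivalently, $u^k(x^k)\to u(x)$ whenever $x^k\to x$ in $[a,b]$, and $V^k(f^k)\to V(f)$ whenever $f^k\to f$ in $X$). (2) If, in addition, all these preferences are aggregative, with aggregative representations $(V^k,u^k,H^k)$ and $(V,u,H)$, then $H^k\to H$ in the compact-open topology on functions $[0,1]^S\to\mathbf{R}$ (equivalently, $H^k(z^k)\to H(z)$ whenever $z^k\to z$ in $[0,1]^S$).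
   Context: Let $S$ be a finite nonempty set and $a<b$ real numbers. $\Delta([a,b])$ denotes the set of Borel probability measures on $[a,b]$ with the topology of weak convergence of measures; $X=\Delta([a,b])^S$ (the set of acts) carries the product topology. For $p\in\Delta([a,b])$, $(p,\dots,p)$ is the constant act equal to $p$; $\delta_x$ is the point mass at $x$. For $p,q\in\Delta([a,b])$, $p$ first-order stochastically dominates $q$ if $\int h\,dp\ge\int h\,dq$ for every bounded continuous nondecreasing $h:[a,b]\to\mathbf{R}$; an act $f$ dominates $g$ if $f(s)$ first-order stochastically dominates $g(s)$ for all $s\in S$. A preference on a topological space $Y$ is a complete and transitive binary relation $\succeq$ that is closed as a subset of $Y\times Y$. A preference $\succeq$ on $X$ is weakly monotone if $f\succeq g$ whenever $f$ dominates $g$. Let $\mathcal U$ be the set of continuous nondecreasing $u:[a,b]\to\mathbf{R}$ with $u(a)=0$, $u(b)=1$. A pair $(V,u)$ is a standard representation if $V:X\to\mathbf{R}$ is continuous, $u\in\mathcal U$, and $V(p,\dots,p)=\int_{[a,b]}u\,dp$ for every $p\in\Delta([a,b])$. A preference $\succeq$ on $X$ is standard if it is weakly monotone and there is a standard representation $(V,u)$ with $V$ representing $\succeq$ (i.e. $f\succeq g\iff V(f)\ge V(g)$). A standard representation $(V,u)$ is aggregative if there is $H:[0,1]^S\to\mathbf{R}$ (the aggregator) with $V(f)=H\big((\int u\,df(s))_{s\in S}\big)$ for all $f\in X$; this is written $(V,u,H)$, and a standard preference is aggregative if it has an aggregative standard representation. Closed convergence: for a sequence $\mathcal F=\{F^n\}$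 of closed subsets of $X\times X$, $\mathrm{Li}(\mathcal F)$ is the set of points $z$ such that every neighborhood of $z$ meets $F^n$ for all sufficiently large $n$, and $\mathrm{Ls}(\mathcal F)$ the set of points $z$ such that every neighborhood of $z$ meets $F^n$ for infinitely many $n$. $F^n\to F$ in the topology of closed convergence iff $\mathrm{Li}(\mathcal F)=F=\mathrm{Ls}(\mathcal F)$. Preferences, as closed subsets of $X\times X$, converge in this sense. *)

theory Defs
  imports "HOL-Analysis.Analysis" "HOL-Probability.Probability"
begin

definition Delta :: "real \<Rightarrow> real \<Rightarrow> real measure set" where
  "Delta a b = {p. prob_space p \<and> sets p = sets (restrict_space borel {a..b})}"

text \<open>Topology of weak convergence on Delta([a,b]): the coarsest topology on
  Delta([a,b]) making every map p |-> integral of h w.r.t. p continuous, for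
  h bounded continuous on [a,b] (boundedness is automatic on the compact [a,b]).\<close>
definition weak_top :: "real \<Rightarrow> real \<Rightarrow> real measure topology" where
  "weak_top a b = topology_generated_by
     {{p \<in> Delta a b. (\<integral>x. h x \<partial>p) \<in> U} | (h :: real \<Rightarrow> real) U. continuous_on {a..b} h \<and> open U}"

definition act_top :: "real \<Rightarrow> real \<Rightarrow> ('s::finite \<Rightarrow> real measure) topology" where
  "act_top a b = product_topology (\<lambda>_. weak_top a b) UNIV"

definition Acts :: "real \<Rightarrow> real \<Rightarrow> ('s::finite \<Rightarrow> real measure) set" where
  "Acts a b = {f. \<forall>s. f s \<in> Delta a b}"

definition fosd :: "real \<Rightarrow> real \<Rightarrow> real measure \<Rightarrow> real measure \<Rightarrow> bool" where
  "fosd a b p q \<longleftrightarrow> (\<forall>h :: real \<Rightarrow> real. continuous_on {a..b} h \<and> mono_on {a..b} h \<longrightarrow>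
       (\<integral>x. h x \<partial>q) \<le> (\<integral>x. h x \<partial>p))"

definition dominates :: "real \<Rightarrow> real \<Rightarrow> ('s::finite \<Rightarrow> real measure) \<Rightarrow> ('s \<Rightarrow> real measure) \<Rightarrow> bool" where
  "dominates a b f g \<longleftrightarrow> (\<forall>s. fosd a b (f s) (g s))"

definition preference :: "real \<Rightarrow> real \<Rightarrow> ('s::finite \<Rightarrow> real measure) rel \<Rightarrow> bool" where
  "preference a b R \<longleftrightarrow> R \<subseteq> Acts a b \<times> Acts a b
     \<and> (\<forall>f\<in>Acts a b. \<forall>g\<in>Acts a b. (f, g) \<in> R \<or> (g, f) \<in> R)
     \<and> trans R
     \<and> closedin (prod_topology (act_top a b) (act_top a b)) R"

definition weakly_monotone :: "real \<Rightarrow> real \<Rightarrow> ('s::finite \<Rightarrow> real measure) rel \<Rightarrow> bool" where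
  "weakly_monotone a b R \<longleftrightarrow>
     (\<forall>f\<in>Acts a b. \<forall>g\<in>Acts a b. dominates a b f g \<longrightarrow> (f, g) \<in> R)"

definition Ufun :: "real \<Rightarrow> real \<Rightarrow> (real \<Rightarrow> real) set" where
  "Ufun a b = {u. continuous_on {a..b} u \<and> mono_on {a..b} u \<and> u a = 0 \<and> u b = 1}"

definition std_rep :: "real \<Rightarrow> real \<Rightarrow> (('s::finite \<Rightarrow> real measure) \<Rightarrow> real) \<Rightarrow> (real \<Rightarrow> real) \<Rightarrow> bool" where
  "std_rep a b V u \<longleftrightarrow> continuous_map (act_top a b) euclideanreal V \<and> u \<in> Ufun a b
     \<and> (\<forall>p\<in>Delta a b. V (\<lambda>s. p) = (\<integral>x. u x \<partial>p))"

definition represents :: "real \<Rightarrow> real \<Rightarrow> ('s::finite \<Rightarrow> real measure) rel \<Rightarrow> (('s \<Rightarrow> real measure) \<Rightarrow> real) \<Rightarrow> bool" where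
  "represents a b R V \<longleftrightarrow> (\<forall>f\<in>Acts a b. \<forall>g\<in>Acts a b. (f, g) \<in> R \<longleftrightarrow> V f \<ge> V g)"

definition standard :: "real \<Rightarrow> real \<Rightarrow> ('s::finite \<Rightarrow> real measure) rel \<Rightarrow> bool" where
  "standard a b R \<longleftrightarrow> preference a b R \<and> weakly_monotone a b R
     \<and> (\<exists>V u. std_rep a b V u \<and> represents a b R V)"

definition aggregative_rep :: "real \<Rightarrow> real \<Rightarrow> (('s::finite \<Rightarrow> real measure) \<Rightarrow> real) \<Rightarrow> (real \<Rightarrow> real)
     \<Rightarrow> (('s \<Rightarrow> real) \<Rightarrow> real) \<Rightarrow> bool" where
  "aggregative_rep a b V u H \<longleftrightarrow> std_rep a b V u
     \<and> (\<forall>f\<in>Acts a b. V f = H (\<lambda>s. \<integral>x. u x \<partial>(f s)))"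

definition Li :: "'a topology \<Rightarrow> (nat \<Rightarrow> 'a set) \<Rightarrow> 'a set" where
  "Li T F = {z \<in> topspace T. \<forall>N. openin T N \<and> z \<in> N \<longrightarrow>
      (\<forall>\<^sub>F n in sequentially. N \<inter> F n \<noteq> {})}"

definition Ls :: "'a topology \<Rightarrow> (nat \<Rightarrow> 'a set) \<Rightarrow> 'a set" where
  "Ls T F = {z \<in> topspace T. \<forall>N. openin T N \<and> z \<in> N \<longrightarrow>
      (\<exists>\<^sub>F n in sequentially. N \<inter> F n \<noteq> {})}"

definition closed_conv :: "'a topology \<Rightarrow> (nat \<Rightarrow> 'a set) \<Rightarrow> 'a set \<Rightarrow> bool" where
  "closed_conv T F A \<longleftrightarrow> Li T F = A \<and> Ls T F = A"

definition co_conv :: "'a topology \<Rightarrow> (nat \<Rightarrow> 'a \<Rightarrow> real) \<Rightarrow> ('a \<Rightarrow> real) \<Rightarrow> bool" where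
  "co_conv T Fs F \<longleftrightarrow> (\<forall>K. compactin T K \<longrightarrow>
     (\<forall>e>0. \<forall>\<^sub>F k in sequentially. \<forall>x\<in>K. \<bar>Fs k x - F x\<bar> < e))"

definition cube_top :: "('s::finite \<Rightarrow> real) topology" where
  "cube_top = subtopology (product_topology (\<lambda>_. euclideanreal) UNIV) {z. \<forall>s. z s \<in> {0..1}}"

end

theory Submission imports Defs begin

definition pm :: "real \<Rightarrow> real \<Rightarrow> real \<Rightarrow> real \<Rightarrow> real \<Rightarrow> real measure" where
  "pm a b x y \<beta> = distr (measure_pmf (bernoulli_pmf \<beta>)) (restrict_space borel {a..b}) (\<lambda>t. if t then y else x)"

lemma pm_Delta:
  assumes "x \<in> {a..b}" "y \<in> {a..b}" "0 \<le> \<beta>" "\<beta> \<le> 1"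
  shows "pm a b x y \<beta> \<in> Delta a b"
proof -
  have m: "(\<lambda>t. if t then y else x) \<in> measurable (measure_pmf (bernoulli_pmf \<beta>)) (restrict_space borel {a..b})"
    using assms by (auto simp: space_restrict_space)
  show ?thesis unfolding Delta_def pm_def
    using prob_space.prob_space_distr[OF prob_space_measure_pmf m] by simp
qed

lemma pm_integral:
  assumes "x \<in> {a..b}" "y \<in> {a..b}" "0 \<le> \<beta>" "\<beta> \<le> 1"
    and h: "continuous_on {a..b} h"
  shows "(\<integral>t. h t \<partial>pm a b x y \<beta>) = h y * \<beta> + h x * (1 - \<beta>)"
proof -
  have m: "(\<lambda>t. if t then y else x) \<in> measurable (measure_pmf (bernoulli_pmf \<beta>)) (restrict_space borel {a..b})"
    using assms by (auto simp: space_restrict_space)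
  show ?thesis unfolding pm_def
    using integral_distr[OF m borel_measurable_continuous_on_restrict[OF h]] assms by simp
qed

lemma Delta_bounds:
  fixes h :: "real \<Rightarrow> real"
  assumes p: "p \<in> Delta a b" and ab: "a \<le> b" and h: "continuous_on {a..b} h" "mono_on {a..b} h"
  shows "h a \<le> (\<integral>t. h t \<partial>p) \<and> (\<integral>t. h t \<partial>p) \<le> h b"
proof -
  interpret prob_space p using p by (simp add: Delta_def)
  have ss: "sets p = sets (restrict_space borel {a..b})" using p by (simp add: Delta_def)
  have sp: "space p = {a..b}" using sets_eq_imp_space_eq[OF ss] by (simp add: space_restrict_space)
  have hm: "h \<in> borel_measurable p"
    unfolding measurable_cong_sets[OF ss refl] by (rule borel_measurable_continuous_on_restrict[OF h(1)])
  obtain B where B: "\<And>t. t \<in> {a..b} \<Longrightarrow> norm (h t) \<le> B"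
    using compact_imp_bounded[OF compact_continuous_image[OF h(1) compact_Icc]]
    unfolding bounded_iff by (metis atLeastAtMost_iff imageI)
  have int: "integrable p h"
  proof -
    have "AE t in p. norm (h t) \<le> B" using B sp by (intro AE_I2) auto
    from finite_measure.integrable_const_bound[OF finite_measure_axioms this hm] show ?thesis .
  qed
  have "(\<integral>t. h a \<partial>p) \<le> (\<integral>t. h t \<partial>p)"
    by (rule integral_mono) (use int sp h(2) ab in \<open>auto intro: mono_onD\<close>)
  moreover have "(\<integral>t. h t \<partial>p) \<le> (\<integral>t. h b \<partial>p)"
    by (rule integral_mono) (use int sp h(2) ab in \<open>auto intro: mono_onD\<close>)
  ultimately show ?thesis by (simp add: prob_space)
qed


lemma topspace_weak_top: "topspace (weak_top a b) = Delta a b"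
  unfolding weak_top_def topology_generated_by_topspace
proof (intro equalityI subsetI)
  fix p assume "p \<in> \<Union>{{p \<in> Delta a b. (\<integral>x. h x \<partial>p) \<in> U} | (h :: real \<Rightarrow> real) U. continuous_on {a..b} h \<and> open U}"
  then show "p \<in> Delta a b" by auto
next
  fix p assume "p \<in> Delta a b"
  then show "p \<in> \<Union>{{p \<in> Delta a b. (\<integral>x. h x \<partial>p) \<in> U} | (h :: real \<Rightarrow> real) U. continuous_on {a..b} h \<and> open U}"
    by (intro UnionI[where X="{q \<in> Delta a b. (\<integral>x. (\<lambda>_. 0::real) x \<partial>q) \<in> UNIV}"]) (blast intro: continuous_on_const, simp)
qed

lemma topspace_act_top: "topspace (act_top a b) = Acts a b"
  by (auto simp: act_top_def Acts_def topspace_weak_top PiE_UNIV_domain)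

lemma continuous_into_weak_top:
  assumes "\<And>x. x \<in> topspace X \<Longrightarrow> \<phi> x \<in> Delta a b"
    and "\<And>(h::real\<Rightarrow>real) U. continuous_on {a..b} h \<Longrightarrow> open U \<Longrightarrow>
          openin X {x \<in> topspace X. (\<integral>t. h t \<partial>\<phi> x) \<in> U}"
  shows "continuous_map X (weak_top a b) \<phi>"
  unfolding weak_top_def
proof (rule continuous_on_generated_topo)
  fix W assume "W \<in> {{p \<in> Delta a b. (\<integral>x. h x \<partial>p) \<in> U} | (h :: real \<Rightarrow> real) U. continuous_on {a..b} h \<and> open U}"
  then obtain h U where hU: "continuous_on {a..b} (h::real\<Rightarrow>real)" "open U"
    and W: "W = {p \<in> Delta a b. (\<integral>x. h x \<partial>p) \<in> U}" by blast
  have "\<phi> -` W \<inter> topspace X = {x \<in> topspace X. (\<integral>t. h t \<partial>\<phi> x) \<in> U}"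
    using assms(1) W by auto
  then show "openin X (\<phi> -` W \<inter> topspace X)" using assms(2)[OF hU] by simp
next
  show "\<phi> ` topspace X \<subseteq> \<Union>{{p \<in> Delta a b. (\<integral>x. h x \<partial>p) \<in> U} | (h :: real \<Rightarrow> real) U. continuous_on {a..b} h \<and> open U}"
  proof
    fix p assume "p \<in> \<phi> ` topspace X"
    then have p: "p \<in> Delta a b" using assms(1) by auto
    then show "p \<in> \<Union>{{p \<in> Delta a b. (\<integral>x. h x \<partial>p) \<in> U} | (h :: real \<Rightarrow> real) U. continuous_on {a..b} h \<and> open U}"
      by (intro UnionI[where X="{q \<in> Delta a b. (\<integral>x. (\<lambda>_. 0::real) x \<partial>q) \<in> UNIV}"]) (blast intro: continuous_on_const, simp)
  qed
qed

lemma co_conv_local: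
  assumes "\<And>x e. x \<in> topspace T \<Longrightarrow> e > 0 \<Longrightarrow>
     \<exists>N. openin T N \<and> x \<in> N \<and> (\<forall>\<^sub>F k in sequentially. \<forall>y\<in>N. \<bar>Fs k y - F y\<bar> < e)"
  shows "co_conv T Fs F"
  unfolding co_conv_def
proof (intro allI impI)
  fix K e assume K: "compactin T K" and e: "(e::real) > 0"
  have "\<forall>x\<in>K. \<exists>N. openin T N \<and> x \<in> N \<and> (\<forall>\<^sub>F k in sequentially. \<forall>y\<in>N. \<bar>Fs k y - F y\<bar> < e)"
    using assms e K compactin_subset_topspace by blast
  then obtain N where N0: "\<forall>x\<in>K. openin T (N x) \<and> x \<in> N x \<and> (\<forall>\<^sub>F k in sequentially. \<forall>y\<in>N x. \<bar>Fs k y - F y\<bar> < e)"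
    by (rule bchoice[THEN exE]) blast
  then have N: "\<And>x. x \<in> K \<Longrightarrow> openin T (N x) \<and> x \<in> N x \<and> (\<forall>\<^sub>F k in sequentially. \<forall>y\<in>N x. \<bar>Fs k y - F y\<bar> < e)"
    by blast
  have "\<exists>\<F>. finite \<F> \<and> \<F> \<subseteq> N ` K \<and> K \<subseteq> \<Union>\<F>"
    using K N unfolding compactin_def by (intro conjunct2[OF K[unfolded compactin_def], rule_format]) auto
  then obtain \<F> where F: "finite \<F>" "\<F> \<subseteq> N ` K" "K \<subseteq> \<Union>\<F>" by blast
  then obtain G where G: "finite G" "G \<subseteq> K" "\<F> = N ` G" by (meson finite_subset_image)
  have "\<forall>\<^sub>F k in sequentially. \<forall>x\<in>G. \<forall>y\<in>N x. \<bar>Fs k y - F y\<bar> < e"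
    using G N by (subst eventually_ball_finite_distrib) auto
  then show "\<forall>\<^sub>F k in sequentially. \<forall>x\<in>K. \<bar>Fs k x - F x\<bar> < e"
    by eventually_elim (use F G in blast)
qed

lemma co_conv_comp:
  assumes c: "co_conv T Fs F" and m: "continuous_map Y T \<phi>"
    and eqk: "\<And>k y. y \<in> topspace Y \<Longrightarrow> Gs k y = Fs k (\<phi> y)"
    and eq: "\<And>y. y \<in> topspace Y \<Longrightarrow> G y = F (\<phi> y)"
  shows "co_conv Y Gs G"
  unfolding co_conv_def
proof (intro allI impI)
  fix K e assume K: "compactin Y K" and e: "(e::real) > 0"
  have "compactin T (\<phi> ` K)" using image_compactin[OF K m] .
  then have "\<forall>\<^sub>F k in sequentially. \<forall>x\<in>\<phi> ` K. \<bar>Fs k x - F x\<bar> < e" using c e unfolding co_conv_def by blast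
  then show "\<forall>\<^sub>F k in sequentially. \<forall>x\<in>K. \<bar>Gs k x - G x\<bar> < e"
    by eventually_elim (use K compactin_subset_topspace eqk eq in fastforce)
qed


lemma pm_in_Acts: "0 \<le> \<beta> \<Longrightarrow> \<beta> \<le> 1 \<Longrightarrow> a \<le> b \<Longrightarrow> (\<lambda>s. pm a b a b \<beta>) \<in> Acts a b"
  unfolding Acts_def using pm_Delta[of a a b b \<beta>] by auto

lemma V_cst:
  assumes sr: "std_rep a b V u" and ab: "a \<le> b" and "0 \<le> \<beta>" "\<beta> \<le> 1"
  shows "V (\<lambda>s. pm a b a b \<beta>) = \<beta>"
proof -
  have u: "continuous_on {a..b} u" "u a = 0" "u b = 1" using sr by (auto simp: std_rep_def Ufun_def)
  have "V (\<lambda>s. pm a b a b \<beta>) = (\<integral>x. u x \<partial>pm a b a b \<beta>)"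
    using sr pm_Delta[of a a b b \<beta>] assms by (auto simp: std_rep_def)
  also have "\<dots> = \<beta>" using pm_integral[of a a b b \<beta> u] u assms by simp
  finally show ?thesis .
qed

lemma V_bounds:
  assumes ab: "a \<le> b" and sr: "std_rep a b V u" and rp: "represents a b R V"
    and wm: "weakly_monotone a b R" and f: "f \<in> Acts a b"
  shows "0 \<le> V f \<and> V f \<le> 1"
proof -
  have fs: "f s \<in> Delta a b" for s using f by (auto simp: Acts_def)
  have d1: "dominates a b (\<lambda>s. pm a b a b 1) f"
    unfolding dominates_def fosd_def
  proof (intro allI impI)
    fix s and h :: "real \<Rightarrow> real" assume h: "continuous_on {a..b} h \<and> mono_on {a..b} h"
    have "(\<integral>x. h x \<partial>pm a b a b 1) = h b" using pm_integral[of a a b b 1 h] h ab by simp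
    then show "(\<integral>x. h x \<partial>f s) \<le> (\<integral>x. h x \<partial>pm a b a b 1)"
      using Delta_bounds[OF fs ab] h by simp
  qed
  have d0: "dominates a b f (\<lambda>s. pm a b a b 0)"
    unfolding dominates_def fosd_def
  proof (intro allI impI)
    fix s and h :: "real \<Rightarrow> real" assume h: "continuous_on {a..b} h \<and> mono_on {a..b} h"
    have "(\<integral>x. h x \<partial>pm a b a b 0) = h a" using pm_integral[of a a b b 0 h] h ab by simp
    then show "(\<integral>x. h x \<partial>pm a b a b 0) \<le> (\<integral>x. h x \<partial>f s)"
      using Delta_bounds[OF fs ab] h by simp
  qed
  have "((\<lambda>s. pm a b a b 1), f) \<in> R" "(f, (\<lambda>s. pm a b a b 0)) \<in> R"
    using wm d1 d0 f pm_in_Acts[of 1 a b] pm_in_Acts[of 0 a b] ab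
    unfolding weakly_monotone_def by auto
  moreover have rp': "\<And>f g. f \<in> Acts a b \<Longrightarrow> g \<in> Acts a b \<Longrightarrow> (f, g) \<in> R \<longleftrightarrow> V g \<le> V f"
    using rp unfolding represents_def by blast
  ultimately have "V (\<lambda>s. pm a b a b 1) \<ge> V f" "V f \<ge> V (\<lambda>s. pm a b a b 0)"
    using rp'[OF pm_in_Acts[of 1 a b] f] rp'[OF f pm_in_Acts[of 0 a b]] ab by auto
  then show ?thesis using V_cst[OF sr ab, of 1] V_cst[OF sr ab, of 0] by simp
qed

lemma V_local:
  fixes R :: "('s::finite \<Rightarrow> real measure) rel" and Rk :: "nat \<Rightarrow> ('s \<Rightarrow> real measure) rel"
  assumes ab: "a \<le> b"
    and sr: "std_rep a b V u" and rp: "represents a b R V"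
    and srk: "\<And>k. std_rep a b (Vk k) (uk k)" and rpk: "\<And>k. represents a b (Rk k) (Vk k)"
    and wmk: "\<And>k. weakly_monotone a b (Rk k)"
    and wm: "weakly_monotone a b R"
    and Ls: "Ls (prod_topology (act_top a b) (act_top a b)) Rk \<subseteq> R"
    and f: "f \<in> Acts a b" and e: "e > 0"
  shows "\<exists>N. openin (act_top a b) N \<and> f \<in> N \<and> (\<forall>\<^sub>F k in sequentially. \<forall>g\<in>N. \<bar>Vk k g - V g\<bar> < e)"
proof -
  let ?T = "prod_topology (act_top a b) (act_top a b)"
  have Vb: "0 \<le> V f \<and> V f \<le> 1" using V_bounds[OF ab sr rp wm f] .
  have Vkb: "\<And>k g. g \<in> Acts a b \<Longrightarrow> 0 \<le> Vk k g \<and> Vk k g \<le> 1"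
    using V_bounds[OF ab srk rpk wmk] by blast
  have upper: "\<exists>N. openin (act_top a b) N \<and> f \<in> N \<and> (\<forall>\<^sub>F k in sequentially. \<forall>g\<in>N. Vk k g < V f + e/2)"
  proof (cases "V f + e/4 > 1")
    case True
    have "\<forall>\<^sub>F k in sequentially. \<forall>g\<in>topspace (act_top a b). Vk k g < V f + e/2"
    proof (intro always_eventually allI ballI)
      fix k and g :: "'s \<Rightarrow> real measure" assume "g \<in> topspace (act_top a b)"
      then have "0 \<le> Vk k g \<and> Vk k g \<le> 1" using Vkb by (simp add: topspace_act_top)
      then show "Vk k g < V f + e/2" using True e by linarith
    qed
    then show ?thesis using f by (intro exI[of _ "topspace (act_top a b)"]) (simp add: topspace_act_top[symmetric])
  next
    case False
    define \<beta> where "\<beta> = V f + e/4"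
    have \<beta>: "0 \<le> \<beta>" "\<beta> \<le> 1" using False Vb e by (auto simp: \<beta>_def)
    define c where "c = (\<lambda>s::'s. pm a b a b \<beta>)"
    have cA: "c \<in> Acts a b" using pm_in_Acts[OF \<beta> ab] by (simp add: c_def)
    have Vkc: "Vk k c = \<beta>" for k using V_cst[OF srk ab \<beta>] by (simp add: c_def)
    have Vc: "V c = \<beta>" using V_cst[OF sr ab \<beta>] by (simp add: c_def)
    show ?thesis
    proof (rule ccontr)
      assume H: "\<not> ?thesis"
      have fr: "\<exists>\<^sub>F k in sequentially. \<exists>g\<in>N. Vk k g \<ge> V f + e/2"
        if "openin (act_top a b) N" "f \<in> N" for N
        using H that by (auto simp: not_eventually not_less)
      have "(f, c) \<in> Ls ?T Rk"
        unfolding Ls_def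
      proof (intro CollectI conjI allI impI)
        show "(f, c) \<in> topspace ?T" using f cA by (simp add: topspace_act_top)
      next
        fix W assume W: "openin ?T W \<and> (f, c) \<in> W"
        then obtain U U' where UU: "openin (act_top a b) U" "openin (act_top a b) U'" "f \<in> U" "c \<in> U'" "U \<times> U' \<subseteq> W"
          unfolding openin_prod_topology_alt by meson
        show "\<exists>\<^sub>F n in sequentially. W \<inter> Rk n \<noteq> {}"
          using fr[OF UU(1,3)]
        proof (rule frequently_elim1)
          fix n assume "\<exists>g\<in>U. V f + e / 2 \<le> Vk n g"
          then obtain g where g: "g \<in> U" "V f + e / 2 \<le> Vk n g" by blast
          have gA: "g \<in> Acts a b" using openin_subset[OF UU(1)] g(1) by (auto simp: topspace_act_top)
          have "(g, c) \<in> Rk n" using rpk[of n] gA cA g(2) Vkc[of n] e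
            unfolding represents_def \<beta>_def by auto
          moreover have "(g, c) \<in> W" using UU g by blast
          ultimately show "W \<inter> Rk n \<noteq> {}" by blast
        qed
      qed
      then have "(f, c) \<in> R" using Ls by blast
      then have "V f \<ge> V c" using rp f cA unfolding represents_def by blast
      then show False using Vc e by (simp add: \<beta>_def)
    qed
  qed
  have lower: "\<exists>N. openin (act_top a b) N \<and> f \<in> N \<and> (\<forall>\<^sub>F k in sequentially. \<forall>g\<in>N. Vk k g > V f - e/2)"
  proof (cases "V f - e/4 < 0")
    case True
    have "\<forall>\<^sub>F k in sequentially. \<forall>g\<in>topspace (act_top a b). Vk k g > V f - e/2"
    proof (intro always_eventually allI ballI)
      fix k and g :: "'s \<Rightarrow> real measure" assume "g \<in> topspace (act_top a b)"
      then have "0 \<le> Vk k g \<and> Vk k g \<le> 1" using Vkb by (simp add: topspace_act_top)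
      then show "Vk k g > V f - e/2" using True e by linarith
    qed
    then show ?thesis using f by (intro exI[of _ "topspace (act_top a b)"]) (simp add: topspace_act_top[symmetric])
  next
    case False
    define \<beta> where "\<beta> = V f - e/4"
    have \<beta>: "0 \<le> \<beta>" "\<beta> \<le> 1" using False Vb e by (auto simp: \<beta>_def)
    define c where "c = (\<lambda>s::'s. pm a b a b \<beta>)"
    have cA: "c \<in> Acts a b" using pm_in_Acts[OF \<beta> ab] by (simp add: c_def)
    have Vkc: "Vk k c = \<beta>" for k using V_cst[OF srk ab \<beta>] by (simp add: c_def)
    have Vc: "V c = \<beta>" using V_cst[OF sr ab \<beta>] by (simp add: c_def)
    show ?thesis
    proof (rule ccontr)
      assume H: "\<not> ?thesis"
      have fr: "\<exists>\<^sub>F k in sequentially. \<exists>g\<in>N. Vk k g \<le> V f - e/2"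
        if "openin (act_top a b) N" "f \<in> N" for N
        using H that by (auto simp: not_eventually not_less)
      have "(c, f) \<in> Ls ?T Rk"
        unfolding Ls_def
      proof (intro CollectI conjI allI impI)
        show "(c, f) \<in> topspace ?T" using f cA by (simp add: topspace_act_top)
      next
        fix W assume W: "openin ?T W \<and> (c, f) \<in> W"
        then obtain U U' where UU: "openin (act_top a b) U" "openin (act_top a b) U'" "c \<in> U" "f \<in> U'" "U \<times> U' \<subseteq> W"
          unfolding openin_prod_topology_alt by meson
        show "\<exists>\<^sub>F n in sequentially. W \<inter> Rk n \<noteq> {}"
          using fr[OF UU(2,4)]
        proof (rule frequently_elim1)
          fix n assume "\<exists>g\<in>U'. Vk n g \<le> V f - e / 2"
          then obtain g where g: "g \<in> U'" "Vk n g \<le> V f - e / 2" by blast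
          have gA: "g \<in> Acts a b" using openin_subset[OF UU(2)] g(1) by (auto simp: topspace_act_top)
          have "(c, g) \<in> Rk n" using rpk[of n] gA cA g(2) Vkc[of n] e
            unfolding represents_def \<beta>_def by auto
          moreover have "(c, g) \<in> W" using UU g by blast
          ultimately show "W \<inter> Rk n \<noteq> {}" by blast
        qed
      qed
      then have "(c, f) \<in> R" using Ls by blast
      then have "V c \<ge> V f" using rp f cA unfolding represents_def by blast
      then show False using Vc e by (simp add: \<beta>_def)
    qed
  qed
  obtain N1 where N1: "openin (act_top a b) N1" "f \<in> N1" "\<forall>\<^sub>F k in sequentially. \<forall>g\<in>N1. Vk k g < V f + e/2"
    using upper by blast
  obtain N2 where N2: "openin (act_top a b) N2" "f \<in> N2" "\<forall>\<^sub>F k in sequentially. \<forall>g\<in>N2. Vk k g > V f - e/2"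
    using lower by blast
  define N3 where "N3 = {g \<in> topspace (act_top a b). V g \<in> {V f - e/2 <..< V f + e/2}}"
  have N3: "openin (act_top a b) N3" unfolding N3_def
    using sr by (intro openin_continuous_map_preimage) (auto simp: std_rep_def)
  have fN3: "f \<in> N3" using f e by (simp add: N3_def topspace_act_top)
  show ?thesis
  proof (intro exI[of _ "N1 \<inter> N2 \<inter> N3"] conjI)
    show "openin (act_top a b) (N1 \<inter> N2 \<inter> N3)" using N1 N2 N3 by blast
    show "f \<in> N1 \<inter> N2 \<inter> N3" using N1 N2 fN3 by blast
    show "\<forall>\<^sub>F k in sequentially. \<forall>g\<in>N1 \<inter> N2 \<inter> N3. \<bar>Vk k g - V g\<bar> < e"
      using N1(3) N2(3)
    proof eventually_elim
      case (elim k)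
      then show ?case by (auto simp: N3_def abs_less_iff)
    qed
  qed
qed


lemma cont_delta:
  assumes ab: "a \<le> b"
  shows "continuous_map (top_of_set {a..b}) (act_top a b) (\<lambda>y (s::'s::finite). pm a b a y 1)"
  unfolding act_top_def continuous_map_componentwise_UNIV
proof
  fix s :: 's
  show "continuous_map (top_of_set {a..b}) (weak_top a b) (\<lambda>y. pm a b a y 1)"
  proof (rule continuous_into_weak_top)
    fix x assume "x \<in> topspace (top_of_set {a..b})"
    then show "pm a b a x 1 \<in> Delta a b" using ab by (intro pm_Delta) auto
  next
    fix h :: "real \<Rightarrow> real" and U :: "real set" assume h: "continuous_on {a..b} h" and U: "open U"
    have "{x \<in> topspace (top_of_set {a..b}). (\<integral>t. h t \<partial>pm a b a x 1) \<in> U} =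
          {x \<in> topspace (top_of_set {a..b}). h x \<in> U}"
      using pm_integral[of a a b _ 1 h] h ab by auto
    moreover have "openin (top_of_set {a..b}) {x \<in> topspace (top_of_set {a..b}). h x \<in> U}"
      using h U by (intro openin_continuous_map_preimage[of _ euclideanreal]) auto
    ultimately show "openin (top_of_set {a..b}) {x \<in> topspace (top_of_set {a..b}). (\<integral>t. h t \<partial>pm a b a x 1) \<in> U}"
      by simp
  qed
qed

lemma topspace_cube: "topspace (cube_top :: ('s::finite \<Rightarrow> real) topology) = {z. \<forall>s. z s \<in> {0..1}}"
  by (simp add: cube_top_def)

lemma cont_mix:
  assumes ab: "a \<le> b"
  shows "continuous_map (cube_top :: ('s::finite \<Rightarrow> real) topology) (act_top a b) (\<lambda>z (s::'s). pm a b a b (z s))"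
  unfolding act_top_def continuous_map_componentwise_UNIV
proof
  fix s :: 's
  show "continuous_map cube_top (weak_top a b) (\<lambda>z. pm a b a b (z s))"
  proof (rule continuous_into_weak_top)
    fix z :: "'s \<Rightarrow> real" assume "z \<in> topspace cube_top"
    then show "pm a b a b (z s) \<in> Delta a b" using ab by (intro pm_Delta) (auto simp: topspace_cube)
  next
    fix h :: "real \<Rightarrow> real" and U :: "real set" assume h: "continuous_on {a..b} h" and U: "open U"
    have "{z \<in> topspace cube_top. (\<integral>t. h t \<partial>pm a b a b (z s)) \<in> U} =
          {z \<in> topspace cube_top. h b * z s + h a * (1 - z s) \<in> U}"
      using pm_integral[of a a b b _ h] h ab by (auto simp: topspace_cube)
    moreover have "continuous_map cube_top euclideanreal (\<lambda>z::'s\<Rightarrow>real. h b * z s + h a * (1 - z s))"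
      unfolding cube_top_def
      by (intro continuous_map_from_subtopology continuous_intros) auto
    then have "openin cube_top {z \<in> topspace cube_top. h b * z s + h a * (1 - z s) \<in> U}"
      using U by (intro openin_continuous_map_preimage[of _ euclideanreal]) auto
    ultimately show "openin cube_top {z \<in> topspace cube_top. (\<integral>t. h t \<partial>pm a b a b (z s)) \<in> U}"
      by simp
  qed
qed

theorem mainTheorem1:
  fixes a b :: real
    and R :: "('s::finite \<Rightarrow> real measure) rel"
    and V :: "('s \<Rightarrow> real measure) \<Rightarrow> real" and u :: "real \<Rightarrow> real"
    and Rk :: "nat \<Rightarrow> ('s \<Rightarrow> real measure) rel"
    and Vk :: "nat \<Rightarrow> ('s \<Rightarrow> real measure) \<Rightarrow> real" and uk :: "nat \<Rightarrow> real \<Rightarrow> real"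
  assumes ab: "a < b"
    and std: "standard a b R" and rep: "std_rep a b V u" "represents a b R V"
    and stdk: "\<And>k. standard a b (Rk k)"
    and repk: "\<And>k. std_rep a b (Vk k) (uk k)" "\<And>k. represents a b (Rk k) (Vk k)"
    and conv: "closed_conv (prod_topology (act_top a b) (act_top a b)) Rk R"
  shows "co_conv (top_of_set {a..b}) uk u \<and> co_conv (act_top a b) Vk V
    \<and> (\<forall>H Hk. aggregative_rep a b V u H \<and> (\<forall>k. aggregative_rep a b (Vk k) (uk k) (Hk k))
          \<longrightarrow> co_conv cube_top Hk H)"
proof -
  have ab': "a \<le> b" using ab by simp
  have Ls: "Ls (prod_topology (act_top a b) (act_top a b)) Rk \<subseteq> R"
    using conv by (simp add: closed_conv_def)
  have wm: "weakly_monotone a b R" using std by (simp add: standard_def)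
  have wmk: "\<And>k. weakly_monotone a b (Rk k)" using stdk by (simp add: standard_def)
  have cV: "co_conv (act_top a b) Vk V"
  proof (rule co_conv_local)
    fix f :: "'s \<Rightarrow> real measure" and e :: real assume "f \<in> topspace (act_top a b)" "e > 0"
    then show "\<exists>N. openin (act_top a b) N \<and> f \<in> N \<and> (\<forall>\<^sub>F k in sequentially. \<forall>y\<in>N. \<bar>Vk k y - V y\<bar> < e)"
      using V_local[OF ab' rep(1) rep(2) repk(1) repk(2) wmk wm Ls] by (simp add: topspace_act_top)
  qed
  have cu: "co_conv (top_of_set {a..b}) uk u"
  proof (rule co_conv_comp[OF cV cont_delta[OF ab']])
    have gen: "W (\<lambda>s. pm a b a y 1) = w y"
      if "y \<in> {a..b}" "std_rep a b W w" for y W w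
    proof -
      have "W (\<lambda>s. pm a b a y 1) = (\<integral>t. w t \<partial>pm a b a y 1)"
        using that pm_Delta[of a a b y 1] ab' by (auto simp: std_rep_def)
      also have "\<dots> = w y" using pm_integral[of a a b y 1 w] that ab' by (auto simp: std_rep_def Ufun_def)
      finally show ?thesis .
    qed
    show "uk k y = Vk k (\<lambda>s. pm a b a y 1)" if "y \<in> topspace (top_of_set {a..b})" for k y
      using gen[OF _ repk(1)] that by simp
    show "u y = V (\<lambda>s. pm a b a y 1)" if "y \<in> topspace (top_of_set {a..b})" for y
      using gen[OF _ rep(1)] that by simp
  qed
  have cH: "co_conv cube_top Hk H"
    if ag: "aggregative_rep a b V u H" and agk: "\<forall>k. aggregative_rep a b (Vk k) (uk k) (Hk k)" for H Hk
  proof (rule co_conv_comp[OF cV cont_mix[OF ab']])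
    have gen: "W (\<lambda>s. pm a b a b (z s)) = G z"
      if z: "z \<in> topspace cube_top" and "aggregative_rep a b W w G" for z W w G
    proof -
      have zs: "0 \<le> z s" "z s \<le> 1" for s using z by (auto simp: topspace_cube)
      have sr: "std_rep a b W w" using that by (simp add: aggregative_rep_def)
      have w: "continuous_on {a..b} w" "w a = 0" "w b = 1" using sr by (auto simp: std_rep_def Ufun_def)
      have A: "(\<lambda>s. pm a b a b (z s)) \<in> Acts a b" using pm_Delta[of a a b b] zs ab' by (auto simp: Acts_def)
      have "W (\<lambda>s. pm a b a b (z s)) = G (\<lambda>s. \<integral>t. w t \<partial>pm a b a b (z s))"
        using that A by (simp add: aggregative_rep_def)
      also have "(\<lambda>s. \<integral>t. w t \<partial>pm a b a b (z s)) = z"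
        using pm_integral[of a a b b _ w] zs w ab' by auto
      finally show ?thesis .
    qed
    show "Hk k z = Vk k (\<lambda>s. pm a b a b (z s))" if "z \<in> topspace cube_top" for k z
      using gen[OF that agk[rule_format, of k]] by simp
    show "H z = V (\<lambda>s. pm a b a b (z s))" if "z \<in> topspace cube_top" for z
      using gen[OF that ag] by simp
  qed
  show ?thesis using cu cV cH by blast
qed

end
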